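(* Fix $\tau>0$, and assume that for every $\lambda\in\Lambda$ the problem $\max_{\pi\in\Pi}\mathcal L_\tau(\pi,\lambda)$ has exactly one maximizer $\pi^*_{\tau,\lambda}$. Assume the CMDP has an optimal policy $\pi^*$ with optimal value $V_0^*(\rho)=V_0^{\pi^*}(\rho)$. Let $\lambda\in\Lambda$. Then $$V_0^*(\rho)-V_0^{\pi^*_{\tau,\lambda}}(\rho)\le\langle\lambda,\nabla d_\tau(\lambda)\rangle+\tau\mathcal H(\pi^*_{\tau,\lambda}),$$ $$\bigl\|[c-V^{\pi^*_{\tau,\lambda}}(\rho)]_+\bigr\|_2=\bigl\|[-\nabla d_\tau(\lambda)]_+\bigr\|_2.$$
   Context: Finite MDP with state space $\mathcal S$, action space $\mathcal A$, transition kernel $\mathrm P$, discount $\gamma\in(0,1)$, initial distribution $\rho$, positive finite rewards $r_0,\dots,r_m$, $r_{0,\max}=\max_{s,a}r_0(s,a)$. $\Pi$ = stationary policies. $V_i^\pi(\rho)=\mathbb{E}[\sum_{t\ge0}\gamma^tr_i(s_t,a_t)]$ with $s_0\sim\rho$, $a_t\sim\pi(\cdot\mid s_t)$, $s_{t+1}\sim\mathrm P(\cdot\mid s_t,a_t)$; $V^\pi(\rho)=(V_1^\pi(\rho),\dots,V_m^\pi(\rho))^\top$; thresholds $c\in\mathbb{R}^m$. The CMDP is $\max_{\pi\in\Pi}V_0^\pi(\rho)$ s.t. $V_i^\pi(\rho)\ge c_i$, $i=1,\dots,m$. Discounted entropy $\mathcal H(\pi)=-\mathbb{E}[\sum_t\gamma^t\log\pi(a_t\mid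 s_t)]$. $\mathcal L_\tau(\pi,\lambda)=V_0^\pi(\rho)+\langle\lambda,V^\pi(\rho)-c\rangle+\tau\mathcal H(\pi)$, $d_\tau(\lambda)=\max_{\pi\in\Pi}\mathcal L_\tau(\pi,\lambda)$ (which is differentiable on $\Lambda$ under the uniqueness hypothesis). $[x]_+$ is the componentwise positive part. For a Slater constant $\xi>0$ (i.e. some $\pi_\xi$ has $V_i^{\pi_\xi}(\rho)\ge c_i+\xi$ for all $i$), $B_\lambda=\frac{r_{0,\max}+\log|\mathcal A|}{(1-\gamma)\xi}$ and $\Lambda=\{\lambda\in\mathbb{R}^m_+:\|\lambda\|_1\le B_\lambda\}$. *)

theory Defs
  imports "HOL-Analysis.Analysis"
begin

text \<open>Finite MDP: states 's, actions 'a (finite types). Transition kernel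
  P s a s' = probability of s' given (s,a). Policies p s a = p(a|s).\<close>

definition is_dist :: "('x::finite \<Rightarrow> real) \<Rightarrow> bool" where
  "is_dist p \<longleftrightarrow> (\<forall>x. 0 \<le> p x) \<and> (\<Sum>x\<in>UNIV. p x) = 1"

definition policies :: "('s::finite \<Rightarrow> 'a::finite \<Rightarrow> real) set" where
  "policies = {p. \<forall>s. is_dist (p s)}"

primrec sdist :: "('s::finite \<Rightarrow> 'a::finite \<Rightarrow> 's \<Rightarrow> real) \<Rightarrow> ('s \<Rightarrow> real)
    \<Rightarrow> ('s \<Rightarrow> 'a \<Rightarrow> real) \<Rightarrow> nat \<Rightarrow> 's \<Rightarrow> real" where
  "sdist P rho p 0 = rho"
| "sdist P rho p (Suc t) = (\<lambda>s'. \<Sum>s\<in>UNIV. \<Sum>a\<in>UNIV. sdist P rho p t s * p s a * P s a s')"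

definition Vf :: "('s::finite \<Rightarrow> 'a::finite \<Rightarrow> 's \<Rightarrow> real) \<Rightarrow> ('s \<Rightarrow> real) \<Rightarrow> real
    \<Rightarrow> ('s \<Rightarrow> 'a \<Rightarrow> real) \<Rightarrow> ('s \<Rightarrow> 'a \<Rightarrow> real) \<Rightarrow> real" where
  "Vf P rho \<gamma> p f = (\<Sum>t. \<gamma> ^ t * (\<Sum>s\<in>UNIV. \<Sum>a\<in>UNIV. sdist P rho p t s * p s a * f s a))"

definition Vvec :: "('s::finite \<Rightarrow> 'a::finite \<Rightarrow> 's \<Rightarrow> real) \<Rightarrow> ('s \<Rightarrow> real) \<Rightarrow> real
    \<Rightarrow> ('m::finite \<Rightarrow> 's \<Rightarrow> 'a \<Rightarrow> real) \<Rightarrow> ('s \<Rightarrow> 'a \<Rightarrow> real) \<Rightarrow> real ^ 'm" where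
  "Vvec P rho \<gamma> r p = (\<chi> i. Vf P rho \<gamma> p (r i))"

definition entropy :: "('s::finite \<Rightarrow> 'a::finite \<Rightarrow> 's \<Rightarrow> real) \<Rightarrow> ('s \<Rightarrow> real) \<Rightarrow> real
    \<Rightarrow> ('s \<Rightarrow> 'a \<Rightarrow> real) \<Rightarrow> real" where
  "entropy P rho \<gamma> p =
     - (\<Sum>t. \<gamma> ^ t * (\<Sum>s\<in>UNIV. \<Sum>a\<in>UNIV. sdist P rho p t s * p s a * ln (p s a)))"

definition Lagr :: "('s::finite \<Rightarrow> 'a::finite \<Rightarrow> 's \<Rightarrow> real) \<Rightarrow> ('s \<Rightarrow> real) \<Rightarrow> real
    \<Rightarrow> ('s \<Rightarrow> 'a \<Rightarrow> real) \<Rightarrow> ('m::finite \<Rightarrow> 's \<Rightarrow> 'a \<Rightarrow> real) \<Rightarrow> real ^ 'm \<Rightarrow> real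
    \<Rightarrow> ('s \<Rightarrow> 'a \<Rightarrow> real) \<Rightarrow> real ^ 'm \<Rightarrow> real" where
  "Lagr P rho \<gamma> r0 r c \<tau> p lam =
     Vf P rho \<gamma> p r0 + lam \<bullet> (Vvec P rho \<gamma> r p - c) + \<tau> * entropy P rho \<gamma> p"

definition dual :: "('s::finite \<Rightarrow> 'a::finite \<Rightarrow> 's \<Rightarrow> real) \<Rightarrow> ('s \<Rightarrow> real) \<Rightarrow> real
    \<Rightarrow> ('s \<Rightarrow> 'a \<Rightarrow> real) \<Rightarrow> ('m::finite \<Rightarrow> 's \<Rightarrow> 'a \<Rightarrow> real) \<Rightarrow> real ^ 'm \<Rightarrow> real
    \<Rightarrow> real ^ 'm \<Rightarrow> real" where
  "dual P rho \<gamma> r0 r c \<tau> lam = (SUP p\<in>policies. Lagr P rho \<gamma> r0 r c \<tau> p lam)"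

definition is_Lmax :: "('s::finite \<Rightarrow> 'a::finite \<Rightarrow> 's \<Rightarrow> real) \<Rightarrow> ('s \<Rightarrow> real) \<Rightarrow> real
    \<Rightarrow> ('s \<Rightarrow> 'a \<Rightarrow> real) \<Rightarrow> ('m::finite \<Rightarrow> 's \<Rightarrow> 'a \<Rightarrow> real) \<Rightarrow> real ^ 'm \<Rightarrow> real
    \<Rightarrow> real ^ 'm \<Rightarrow> ('s \<Rightarrow> 'a \<Rightarrow> real) \<Rightarrow> bool" where
  "is_Lmax P rho \<gamma> r0 r c \<tau> lam p \<longleftrightarrow> p \<in> policies \<and>
     (\<forall>p'\<in>policies. Lagr P rho \<gamma> r0 r c \<tau> p' lam \<le> Lagr P rho \<gamma> r0 r c \<tau> p lam)"

definition feasible :: "('s::finite \<Rightarrow> 'a::finite \<Rightarrow> 's \<Rightarrow> real) \<Rightarrow> ('s \<Rightarrow> real) \<Rightarrow> real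
    \<Rightarrow> ('m::finite \<Rightarrow> 's \<Rightarrow> 'a \<Rightarrow> real) \<Rightarrow> real ^ 'm \<Rightarrow> ('s \<Rightarrow> 'a \<Rightarrow> real) \<Rightarrow> bool" where
  "feasible P rho \<gamma> r c p \<longleftrightarrow> p \<in> policies \<and> (\<forall>i. Vvec P rho \<gamma> r p $ i \<ge> c $ i)"

definition Lam :: "real \<Rightarrow> real \<Rightarrow> real \<Rightarrow> real \<Rightarrow> (real ^ 'm::finite) set" where
  "Lam r0max nA \<gamma> \<xi> =
     {lam. (\<forall>i. 0 \<le> lam $ i) \<and> (\<Sum>i\<in>UNIV. \<bar>lam $ i\<bar>) \<le> (r0max + ln nA) / ((1 - \<gamma>) * \<xi>)}"

definition pos_part :: "real ^ 'm::finite \<Rightarrow> real ^ 'm" where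
  "pos_part x = (\<chi> i. max 0 (x $ i))"

end

theory Submission
  imports Defs
begin

lemma subgrad_eq_grad:
  fixes f :: "'v::real_inner \<Rightarrow> real"
  assumes d: "GDERIV f x :> g" and sub: "\<And>y. f x + inner s (y - x) \<le> f y"
  shows "g = s"
proof -
  have D: "((\<lambda>y. f y - inner s (y - x)) has_derivative (\<lambda>h. inner h g - inner s h)) (at x)"
    using d unfolding gderiv_def
    by (auto intro!: derivative_eq_intros)
  have "(\<lambda>h. inner h g - inner s h) = (\<lambda>h. 0)"
    proof (rule has_derivative_local_min[OF D], rule always_eventually, rule allI)
    fix y show "f x - inner s (x - x) \<le> f y - inner s (y - x)" using sub[of y] by simp
  qed
  hence "inner (g - s) g - inner s (g - s) = 0" by metis
  hence "inner (g - s) (g - s) = 0" by (simp add: algebra_simps inner_commute)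
  thus ?thesis by simp
qed


lemma sdist_dist:
  assumes P: "\<forall>s a. is_dist (P s a)" and rho: "is_dist rho" and p: "p \<in> policies"
  shows "is_dist (sdist P rho p t)"
proof (induction t)
  case 0 then show ?case using rho by simp
next
  case (Suc t)
  let ?d = "sdist P rho p t"
  have pd: "\<And>s. is_dist (p s)" using p by (simp add: policies_def)
  have nn: "\<forall>x. 0 \<le> sdist P rho p (Suc t) x"
    using Suc P pd by (auto simp: is_dist_def intro!: sum_nonneg mult_nonneg_nonneg)
  have "(\<Sum>s'\<in>UNIV. sdist P rho p (Suc t) s') = (\<Sum>s\<in>UNIV. \<Sum>a\<in>UNIV. ?d s * p s a * (\<Sum>s'\<in>UNIV. P s a s'))"
  proof -
    have "(\<Sum>s'\<in>UNIV. sdist P rho p (Suc t) s') = (\<Sum>s'\<in>UNIV. \<Sum>s\<in>UNIV. \<Sum>a\<in>UNIV. ?d s * p s a * P s a s')" by simp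
    also have "\<dots> = (\<Sum>s\<in>UNIV. \<Sum>s'\<in>UNIV. \<Sum>a\<in>UNIV. ?d s * p s a * P s a s')" by (rule sum.swap)
    also have "\<dots> = (\<Sum>s\<in>UNIV. \<Sum>a\<in>UNIV. \<Sum>s'\<in>UNIV. ?d s * p s a * P s a s')" by (rule sum.cong[OF refl], rule sum.swap)
    also have "\<dots> = (\<Sum>s\<in>UNIV. \<Sum>a\<in>UNIV. ?d s * p s a * (\<Sum>s'\<in>UNIV. P s a s'))" by (simp add: sum_distrib_left)
    finally show ?thesis .
  qed
  also have "\<dots> = (\<Sum>s\<in>UNIV. ?d s * (\<Sum>a\<in>UNIV. p s a))"
    using P by (simp add: is_dist_def sum_distrib_left)
  also have "\<dots> = 1" using pd Suc by (simp add: is_dist_def)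
  finally show ?case using nn by (simp add: is_dist_def)
qed


lemma dist_bound:
  fixes d :: "'s::finite \<Rightarrow> real" and q :: "'s \<Rightarrow> 'a::finite \<Rightarrow> real"
  assumes d: "is_dist d" and q: "\<And>s. \<bar>\<Sum>a\<in>UNIV. q s a\<bar> \<le> M"
  shows "\<bar>\<Sum>s\<in>UNIV. \<Sum>a\<in>UNIV. d s * q s a\<bar> \<le> M"
proof -
  have "\<bar>\<Sum>s\<in>UNIV. \<Sum>a\<in>UNIV. d s * q s a\<bar> = \<bar>\<Sum>s\<in>UNIV. d s * (\<Sum>a\<in>UNIV. q s a)\<bar>"
    by (simp add: sum_distrib_left)
  also have "\<dots> \<le> (\<Sum>s\<in>UNIV. \<bar>d s * (\<Sum>a\<in>UNIV. q s a)\<bar>)" by (rule sum_abs)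
  also have "\<dots> \<le> (\<Sum>s\<in>UNIV. d s * M)"
    using d q by (intro sum_mono) (auto simp: is_dist_def abs_mult intro: mult_left_mono)
  also have "\<dots> = M" using d by (simp add: is_dist_def sum_distrib_right[symmetric])
  finally show ?thesis .
qed


lemma series_bound:
  fixes x :: "nat \<Rightarrow> real"
  assumes g: "0 < \<gamma>" "\<gamma> < 1" and x: "\<And>t. \<bar>x t\<bar> \<le> M"
  shows "summable (\<lambda>t. \<gamma>^t * x t)" "\<bar>\<Sum>t. \<gamma>^t * x t\<bar> \<le> M / (1 - \<gamma>)"
proof -
  have gs: "summable (\<lambda>t. M * \<gamma>^t)" using g by (simp add: summable_mult)
  have le: "\<And>t. norm (\<gamma>^t * x t) \<le> M * \<gamma>^t"
    using x g by (simp add: abs_mult mult.commute mult_left_mono)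
  show s: "summable (\<lambda>t. \<gamma>^t * x t)"
    by (rule summable_comparison_test[OF _ gs]) (use le in auto)
  have sa: "summable (\<lambda>t. \<bar>\<gamma>^t * x t\<bar>)"
    by (rule summable_comparison_test[OF _ gs]) (use le in auto)
  have "\<bar>\<Sum>t. \<gamma>^t * x t\<bar> \<le> (\<Sum>t. \<bar>\<gamma>^t * x t\<bar>)" by (rule summable_rabs[OF sa])
  also have "\<dots> \<le> (\<Sum>t. M * \<gamma>^t)" by (rule suminf_le) (use le sa gs in auto)
  also have "\<dots> = M / (1 - \<gamma>)" using g by (simp add: suminf_mult suminf_geometric)
  finally show "\<bar>\<Sum>t. \<gamma>^t * x t\<bar> \<le> M / (1 - \<gamma>)" .
qed


lemma xlnx_bound:
  fixes x :: real assumes "0 \<le> x" "x \<le> 1" shows "\<bar>x * ln x\<bar> \<le> 1"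
proof (cases "x = 0")
  case False
  hence xp: "0 < x" using assms by simp
  have "ln (1/x) \<le> 1/x - 1" by (rule ln_le_minus_one) (use xp in simp)
  hence "- ln x \<le> 1/x - 1" using xp by (simp add: ln_div)
  hence "- x * ln x \<le> 1 - x" using xp by (simp add: field_simps)
  moreover have "ln x \<le> 0" using xp assms by simp
  hence "x * ln x \<le> 0" using xp by (simp add: mult_nonneg_nonpos)
  ultimately show ?thesis using assms by linarith
qed simp



lemma vf_bound:
  fixes P :: "'s::finite \<Rightarrow> 'a::finite \<Rightarrow> 's \<Rightarrow> real"
  assumes P: "\<forall>s a. is_dist (P s a)" and rho: "is_dist rho" and p: "p \<in> policies"
    and g: "0 < \<gamma>" "\<gamma> < 1"
  shows "\<bar>Vf P rho \<gamma> p f\<bar> \<le> (\<Sum>s\<in>UNIV. \<Sum>a\<in>UNIV. \<bar>f s a\<bar>) / (1 - \<gamma>)"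
proof -
  let ?M = "\<Sum>s\<in>UNIV. \<Sum>a\<in>UNIV. \<bar>f s a\<bar>"
  have pd: "\<And>s. is_dist (p s)" using p by (simp add: policies_def)
  have ple: "\<And>s a. p s a \<le> 1"
  proof -
    fix s a
    have "p s a \<le> (\<Sum>a\<in>UNIV. p s a)" by (rule member_le_sum) (use pd in \<open>auto simp: is_dist_def\<close>)
    thus "p s a \<le> 1" using pd[of s] by (simp add: is_dist_def)
  qed
  have q: "\<bar>\<Sum>a\<in>UNIV. p s a * f s a\<bar> \<le> ?M" for s
  proof -
    have "\<bar>\<Sum>a\<in>UNIV. p s a * f s a\<bar> \<le> (\<Sum>a\<in>UNIV. \<bar>p s a * f s a\<bar>)" by (rule sum_abs)
    also have "\<dots> \<le> (\<Sum>a\<in>UNIV. \<bar>f s a\<bar>)"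
      using pd[of s] ple[of s] by (intro sum_mono) (auto simp: abs_mult is_dist_def intro!: mult_left_le_one_le)
    also have "\<dots> \<le> ?M" by (rule member_le_sum) (auto intro: sum_nonneg)
    finally show ?thesis .
  qed
  have x: "\<bar>\<Sum>s\<in>UNIV. \<Sum>a\<in>UNIV. sdist P rho p t s * p s a * f s a\<bar> \<le> ?M" for t
    using dist_bound[OF sdist_dist[OF P rho p, of t] q] by (simp add: mult.assoc)
  show ?thesis unfolding Vf_def by (rule series_bound(2)[OF g x])
qed

lemma ent_bound:
  fixes P :: "'s::finite \<Rightarrow> 'a::finite \<Rightarrow> 's \<Rightarrow> real"
  assumes P: "\<forall>s a. is_dist (P s a)" and rho: "is_dist rho" and p: "p \<in> policies"
    and g: "0 < \<gamma>" "\<gamma> < 1"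
  shows "\<bar>entropy P rho \<gamma> p\<bar> \<le> real CARD('a) / (1 - \<gamma>)" "0 \<le> entropy P rho \<gamma> p"
proof -
  have pd: "\<And>s. is_dist (p s)" using p by (simp add: policies_def)
  have ple: "\<And>s a. p s a \<le> 1"
  proof -
    fix s a
    have "p s a \<le> (\<Sum>a\<in>UNIV. p s a)" by (rule member_le_sum) (use pd in \<open>auto simp: is_dist_def\<close>)
    thus "p s a \<le> 1" using pd[of s] by (simp add: is_dist_def)
  qed
  have q: "\<bar>\<Sum>a\<in>UNIV. p s a * ln (p s a)\<bar> \<le> real CARD('a)" for s
  proof -
    have "\<bar>\<Sum>a\<in>UNIV. p s a * ln (p s a)\<bar> \<le> (\<Sum>a\<in>UNIV. \<bar>p s a * ln (p s a)\<bar>)" by (rule sum_abs)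
    also have "\<dots> \<le> (\<Sum>a\<in>(UNIV::'a set). 1)"
      using pd[of s] ple[of s] by (intro sum_mono xlnx_bound) (auto simp: is_dist_def)
    finally show ?thesis by simp
  qed
  have x: "\<bar>\<Sum>s\<in>UNIV. \<Sum>a\<in>UNIV. sdist P rho p t s * p s a * ln (p s a)\<bar> \<le> real CARD('a)" for t
    using dist_bound[OF sdist_dist[OF P rho p, of t] q] by (simp add: mult.assoc)
  show "\<bar>entropy P rho \<gamma> p\<bar> \<le> real CARD('a) / (1 - \<gamma>)"
    unfolding entropy_def using series_bound(2)[OF g x] by simp
  have sm: "summable (\<lambda>t. \<gamma> ^ t * (\<Sum>s\<in>UNIV. \<Sum>a\<in>UNIV. sdist P rho p t s * p s a * ln (p s a)))"
    by (rule series_bound(1)[OF g x])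
  have np: "\<gamma> ^ t * (\<Sum>s\<in>UNIV. \<Sum>a\<in>UNIV. sdist P rho p t s * p s a * ln (p s a)) \<le> 0" for t
  proof -
    have "(\<Sum>s\<in>UNIV. \<Sum>a\<in>UNIV. sdist P rho p t s * p s a * ln (p s a)) \<le> 0"
    proof (intro sum_nonpos)
      fix s a
      have d: "0 \<le> sdist P rho p t s" using sdist_dist[OF P rho p, of t] by (simp add: is_dist_def)
      have "p s a * ln (p s a) \<le> 0"
      proof (cases "p s a = 0")
        case False
        hence "0 < p s a" using pd[of s] by (simp add: is_dist_def order_le_neq_trans)
        thus ?thesis using ple[of s a] by (simp add: mult_nonneg_nonpos)
      qed simp
      thus "sdist P rho p t s * p s a * ln (p s a) \<le> 0" using d by (simp add: mult.assoc mult_nonneg_nonpos)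
    qed
    thus ?thesis using g by (simp add: mult_nonneg_nonpos)
  qed
  have "(\<Sum>t. \<gamma> ^ t * (\<Sum>s\<in>UNIV. \<Sum>a\<in>UNIV. sdist P rho p t s * p s a * ln (p s a))) \<le> (\<Sum>t. (0::real))"
    by (rule suminf_le) (use np sm in auto)
  thus "0 \<le> entropy P rho \<gamma> p" unfolding entropy_def by simp
qed

lemma aux_ineq: "0 \<le> (f::real) \<Longrightarrow> a + b + f \<le> d + e + h \<Longrightarrow> 0 \<le> b \<Longrightarrow> a - d \<le> e + h"
  by linarith

theorem lemma6:
  fixes P :: "'s::finite \<Rightarrow> 'a::finite \<Rightarrow> 's \<Rightarrow> real"
    and rho :: "'s \<Rightarrow> real"
    and \<gamma> \<tau> \<xi> :: real
    and r0 :: "'s \<Rightarrow> 'a \<Rightarrow> real"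
    and r :: "'m::finite \<Rightarrow> 's \<Rightarrow> 'a \<Rightarrow> real"
    and c lam g :: "real ^ 'm"
    and pistar pi_l pi_xi :: "'s \<Rightarrow> 'a \<Rightarrow> real"
  defines "\<Lambda> \<equiv> Lam (Max (range (\<lambda>(s, a). r0 s a))) (real CARD('a)) \<gamma> \<xi> :: (real ^ 'm) set"
  assumes P: "\<forall>s a. is_dist (P s a)"
    and rho: "is_dist rho"
    and gamma: "0 < \<gamma>" "\<gamma> < 1"
    and r0_pos: "\<forall>s a. 0 < r0 s a"
    and r_pos: "\<forall>i s a. 0 < r i s a"
    and tau: "0 < \<tau>"
    and slater: "0 < \<xi>" "pi_xi \<in> policies"
                "\<forall>i. Vvec P rho \<gamma> r pi_xi $ i \<ge> c $ i + \<xi>"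
    and uniq: "\<forall>l\<in>\<Lambda>. \<exists>!p. is_Lmax P rho \<gamma> r0 r c \<tau> l p"
    and opt: "feasible P rho \<gamma> r c pistar"
             "\<forall>p. feasible P rho \<gamma> r c p \<longrightarrow> Vf P rho \<gamma> p r0 \<le> Vf P rho \<gamma> pistar r0"
    and lam: "lam \<in> \<Lambda>"
    and pil: "is_Lmax P rho \<gamma> r0 r c \<tau> lam pi_l"
    and grad: "GDERIV (dual P rho \<gamma> r0 r c \<tau>) lam :> g"
  shows "Vf P rho \<gamma> pistar r0 - Vf P rho \<gamma> pi_l r0 \<le> lam \<bullet> g + \<tau> * entropy P rho \<gamma> pi_l
       \<and> norm (pos_part (c - Vvec P rho \<gamma> r pi_l)) = norm (pos_part (- g))"
proof -
  let ?L = "Lagr P rho \<gamma> r0 r c \<tau>"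
  let ?B = "\<lambda>f::'s \<Rightarrow> 'a \<Rightarrow> real. (\<Sum>s\<in>UNIV. \<Sum>a\<in>UNIV. \<bar>f s a\<bar>) / (1 - \<gamma>)"
  have pl: "pi_l \<in> policies" and plmax: "\<And>p. p \<in> policies \<Longrightarrow> ?L p lam \<le> ?L pi_l lam"
    using pil by (auto simp: is_Lmax_def)
  have bdd: "bdd_above ((\<lambda>p. ?L p l) ` policies)" for l
  proof (rule bdd_aboveI2)
    fix p :: "'s \<Rightarrow> 'a \<Rightarrow> real" assume p: "p \<in> policies"
    have v0: "Vf P rho \<gamma> p r0 \<le> ?B r0" using vf_bound[OF P rho p gamma, of r0] abs_le_D1 by blast
    have e: "\<tau> * entropy P rho \<gamma> p \<le> \<tau> * (real CARD('a) / (1 - \<gamma>))"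
      using ent_bound(1)[OF P rho p gamma] tau by (intro mult_left_mono) auto
    have i: "l \<bullet> (Vvec P rho \<gamma> r p - c) \<le> (\<Sum>i\<in>UNIV. \<bar>l $ i\<bar> * (?B (r i) + \<bar>c $ i\<bar>))"
    proof -
      have "l \<bullet> (Vvec P rho \<gamma> r p - c) = (\<Sum>i\<in>UNIV. l $ i * (Vf P rho \<gamma> p (r i) - c $ i))"
        by (simp add: inner_vec_def Vvec_def)
      also have "\<dots> \<le> (\<Sum>i\<in>UNIV. \<bar>l $ i\<bar> * (?B (r i) + \<bar>c $ i\<bar>))"
      proof (rule sum_mono)
        fix i
        have "\<bar>Vf P rho \<gamma> p (r i) - c $ i\<bar> \<le> \<bar>Vf P rho \<gamma> p (r i)\<bar> + \<bar>c $ i\<bar>"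
          by (rule abs_triangle_ineq4)
        also have "\<dots> \<le> ?B (r i) + \<bar>c $ i\<bar>"
          by (rule add_right_mono[OF vf_bound[OF P rho p gamma, of "r i"]])
        finally have "\<bar>Vf P rho \<gamma> p (r i) - c $ i\<bar> \<le> ?B (r i) + \<bar>c $ i\<bar>" .
        hence "\<bar>l $ i\<bar> * \<bar>Vf P rho \<gamma> p (r i) - c $ i\<bar> \<le> \<bar>l $ i\<bar> * (?B (r i) + \<bar>c $ i\<bar>)"
          by (intro mult_left_mono) auto
        have "l $ i * (Vf P rho \<gamma> p (r i) - c $ i) \<le> \<bar>l $ i * (Vf P rho \<gamma> p (r i) - c $ i)\<bar>"
          by (rule abs_ge_self)
        also have "\<dots> = \<bar>l $ i\<bar> * \<bar>Vf P rho \<gamma> p (r i) - c $ i\<bar>" by (rule abs_mult)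
        also note \<open>\<bar>l $ i\<bar> * \<bar>Vf P rho \<gamma> p (r i) - c $ i\<bar> \<le> \<bar>l $ i\<bar> * (?B (r i) + \<bar>c $ i\<bar>)\<close>
        finally show "l $ i * (Vf P rho \<gamma> p (r i) - c $ i) \<le> \<bar>l $ i\<bar> * (?B (r i) + \<bar>c $ i\<bar>)" .
      qed
      finally show ?thesis .
    qed
    show "?L p l \<le> ?B r0 + (\<Sum>i\<in>UNIV. \<bar>l $ i\<bar> * (?B (r i) + \<bar>c $ i\<bar>)) + \<tau> * (real CARD('a) / (1 - \<gamma>))"
      unfolding Lagr_def by (intro add_mono v0 i e)
  qed
  have dlam: "dual P rho \<gamma> r0 r c \<tau> lam = ?L pi_l lam"
    unfolding dual_def by (rule cSup_eq_maximum) (use pl plmax in auto)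
  have dge: "?L pi_l l \<le> dual P rho \<gamma> r0 r c \<tau> l" for l
    unfolding dual_def by (rule cSUP_upper[OF pl bdd])
  have lin: "?L pi_l l = ?L pi_l lam + inner (Vvec P rho \<gamma> r pi_l - c) (l - lam)" for l
    unfolding Lagr_def by (simp add: inner_diff_right inner_commute[of "Vvec P rho \<gamma> r pi_l - c"])
  have geq: "g = Vvec P rho \<gamma> r pi_l - c"
    by (rule subgrad_eq_grad[OF grad]) (use dlam dge lin in \<open>metis add.commute\<close>)
  have ps: "pistar \<in> policies" and fs: "\<And>i. c $ i \<le> Vvec P rho \<gamma> r pistar $ i"
    using opt(1) by (auto simp: feasible_def)
  have lnn: "\<And>i. 0 \<le> lam $ i" using lam by (simp add: \<Lambda>_def Lam_def)
  have ip: "0 \<le> lam \<bullet> (Vvec P rho \<gamma> r pistar - c)"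
    unfolding inner_vec_def using lnn fs by (intro sum_nonneg) simp
  have hs: "0 \<le> entropy P rho \<gamma> pistar" by (rule ent_bound(2)[OF P rho ps gamma])
  have "?L pistar lam \<le> ?L pi_l lam" by (rule plmax[OF ps])
  hence c1: "Vf P rho \<gamma> pistar r0 - Vf P rho \<gamma> pi_l r0 \<le> lam \<bullet> g + \<tau> * entropy P rho \<gamma> pi_l"
  proof -
    have "0 \<le> \<tau> * entropy P rho \<gamma> pistar" using hs tau by simp
    thus ?thesis using \<open>?L pistar lam \<le> ?L pi_l lam\<close> ip unfolding Lagr_def geq by (rule aux_ineq)
  qed
  have eq: "c - Vvec P rho \<gamma> r pi_l = - g" using geq by simp
  show ?thesis using c1 unfolding eq by blast
qed

end
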